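(* Consider the uplink system described in the context and the problem $$\text{(P)}:\ \max\ \log\Big|\sum_{v=1}^U \mathbf G_v(\mathbf w_v)\mathbf Q_v\mathbf G_v^H(\mathbf w_v)+\mathbf I_M\Big|$$ over $\mathbf Q_v\in\mathbb C^{N_v\times N_v}$, $\mathbf Q_v\succeq\mathbf 0$, $\mathrm{tr}(\mathbf Q_v)\le P_v$, and $\mathbf w_v\in\mathbb R^{N_v}$ with $0\le w_{v,n}\le W_v$ and $w_{v,n}\ne w_{v,n'}$ for $n\neq n'$, for all $v\in\{1,\dots,U\}$. Suppose that for some user $u$ we have $L_u=1$. Let $\mathcal U'=\{1,\dots,U\}\setminus\{u\}$. Then (P) is equivalent (in the sense of having the same optimal objective value) to the problem $$\max\ \log\Big|\sum_{v\in\mathcal U'}\mathbf G_v(\mathbf w_v)\mathbf Q_v\mathbf G_v^H(\mathbf w_v)+MN_uP_u|\gamma_{u,1}|^2\mathbf a_{u,\mathrm R}(\beta_{u,1})\mathbf a_{u,\mathrm R}^H(\beta_{u,1})+\mathbf I_M\Big|$$ over $\mathbf Q_v\succeq\mathbf 0$, $\mathrm{tr}(\mathbf Q_v)\le P_v$, $0\le w_{v,n}\le W_v$, $w_{v,n}\ne w_{v,n'}$ ($n\ne n'$), for all $v\in\mathcal U'$.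
   Context: A base station (BS) has an $M$-antenna uniform linear array with spacing $d=\lambda/2$ ($\lambda$ the wavelength). User $v\in\{1,\dots,U\}$ has $N_v$ antennas at positions $w_{v,1},\dots,w_{v,N_v}\in[0,W_v]$ on a line, power budget $P_v>0$, and $L_v$ propagation paths to the BS with complex gains $\gamma_{v,l}$, angles of arrival $\beta_{v,l}\in[0,\pi]$ and angles of departure $\theta_{v,l}\in[0,\pi]$. Define $\mathbf a_{v,\mathrm R}(\beta)=\frac1{\sqrt M}[1,e^{-j\frac{2\pi}{\lambda}d\cos\beta},\dots,e^{-j\frac{2\pi}{\lambda}(M-1)d\cos\beta}]^T$, $\mathbf a_{v,\mathrm T}(\theta,\mathbf w_v)=\frac1{\sqrt{N_v}}[e^{-j\frac{2\pi}{\lambda}w_{v,1}\cos\theta},\dots,e^{-j\frac{2\pi}{\lambda}w_{v,N_v}\cos\theta}]^T$, $\boldsymbol\Gamma_v=\mathrm{diag}(\gamma_{v,1},\dots,\gamma_{v,L_v})$, $\mathbf A_{v,\mathrm R}=[\mathbf a_{v,\mathrm R}(\beta_{v,l})]_{l=1}^{L_v}\in\mathbb C^{M\times L_v}$, $\mathbf A_{v,\mathrm T}(\mathbf w_v)=[\mathbf a_{v,\mathrm T}(\theta_{v,l},\mathbf w_v)]_{l=1}^{L_v}\in\mathbb C^{N_v\times L_v}$, and the channel $\mathbf G_v(\mathbf w_v)=\sqrt{MN_v}\,\mathbf A_{v,\mathrm R}\boldsymbol\Gamma_v\mathbf A_{v,\mathrm T}^H(\mathbf w_v)$. $|\cdot|$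 denotes determinant. *)

theory Defs
  imports "HOL-Analysis.Analysis" "Jordan_Normal_Form.Matrix" "Jordan_Normal_Form.Determinant"
begin

definition herm :: "complex mat \<Rightarrow> complex mat" where
  "herm A = mat (dim_col A) (dim_row A) (\<lambda>(i,j). cnj (A $$ (j,i)))"

definition psd :: "nat \<Rightarrow> complex mat \<Rightarrow> bool" where
  "psd n Q \<longleftrightarrow> Q \<in> carrier_mat n n \<and> herm Q = Q \<and>
     (\<forall>x \<in> carrier_vec n. 0 \<le> Re (conjugate x \<bullet> (Q *\<^sub>v x)))"

definition mtrace :: "complex mat \<Rightarrow> complex" where
  "mtrace A = (\<Sum>i<dim_row A. A $$ (i,i))"

text \<open>Receive steering vector a_R(beta) (column, as M x 1 matrix), spacing d = lambda/2.\<close>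
definition aR :: "nat \<Rightarrow> real \<Rightarrow> real \<Rightarrow> complex mat" where
  "aR M lam \<beta> = mat M 1 (\<lambda>(k,_). complex_of_real (1 / sqrt (real M)) *
      cis (- (2 * pi / lam) * real k * (lam / 2) * cos \<beta>))"

definition AR :: "nat \<Rightarrow> real \<Rightarrow> nat \<Rightarrow> (nat \<Rightarrow> real) \<Rightarrow> complex mat" where
  "AR M lam L \<beta> = mat M L (\<lambda>(k,l). complex_of_real (1 / sqrt (real M)) *
      cis (- (2 * pi / lam) * real k * (lam / 2) * cos (\<beta> l)))"

definition AT :: "nat \<Rightarrow> real \<Rightarrow> nat \<Rightarrow> (nat \<Rightarrow> real) \<Rightarrow> real vec \<Rightarrow> complex mat" where
  "AT N lam L \<theta> w = mat N L (\<lambda>(n,l). complex_of_real (1 / sqrt (real N)) *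
      cis (- (2 * pi / lam) * (w $ n) * cos (\<theta> l)))"

definition Gam :: "nat \<Rightarrow> (nat \<Rightarrow> complex) \<Rightarrow> complex mat" where
  "Gam L g = mat L L (\<lambda>(i,j). if i = j then g i else 0)"

definition chan :: "nat \<Rightarrow> real \<Rightarrow> nat \<Rightarrow> nat \<Rightarrow> (nat \<Rightarrow> complex) \<Rightarrow> (nat \<Rightarrow> real)
    \<Rightarrow> (nat \<Rightarrow> real) \<Rightarrow> real vec \<Rightarrow> complex mat" where
  "chan M lam N L g \<beta> \<theta> w =
     complex_of_real (sqrt (real M * real N)) \<cdot>\<^sub>m (AR M lam L \<beta> * Gam L g * herm (AT N lam L \<theta> w))"

definition msum :: "nat \<Rightarrow> nat set \<Rightarrow> (nat \<Rightarrow> complex mat) \<Rightarrow> complex mat" where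
  "msum M S f = foldr (\<lambda>v acc. f v + acc) (sorted_list_of_set S) (0\<^sub>m M M)"

definition pos_ok :: "nat \<Rightarrow> real \<Rightarrow> real vec \<Rightarrow> bool" where
  "pos_ok N W w \<longleftrightarrow> w \<in> carrier_vec N \<and> (\<forall>n<N. 0 \<le> w $ n \<and> w $ n \<le> W) \<and>
     (\<forall>n<N. \<forall>n'<N. n \<noteq> n' \<longrightarrow> w $ n \<noteq> w $ n')"

definition cov_ok :: "nat \<Rightarrow> real \<Rightarrow> complex mat \<Rightarrow> bool" where
  "cov_ok N P Q \<longleftrightarrow> psd N Q \<and> Re (mtrace Q) \<le> P"

end

theory Submission
  imports Defs
begin

unbundle no vec_syntax

lemma foldr_msum:
  assumes "\<And>v. v \<in> set xs \<Longrightarrow> f v \<in> carrier_mat M M"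
  shows "foldr (\<lambda>v acc. f v + acc) xs (0\<^sub>m M M) = mat M M (\<lambda>(i,j). \<Sum>v\<leftarrow>xs. f v $$ (i,j))"
  using assms
proof (induction xs)
  case Nil
  then show ?case by (simp add: zero_mat_def)
next
  case (Cons a xs)
  have c: "f a \<in> carrier_mat M M" using Cons.prems by auto
  have ih: "foldr (\<lambda>v acc. f v + acc) xs (0\<^sub>m M M) = mat M M (\<lambda>(i,j). \<Sum>v\<leftarrow>xs. f v $$ (i,j))"
    using Cons by auto
  show ?case
  proof (rule eq_matI)
    fix i j assume ij: "i < dim_row (mat M M (\<lambda>(i,j). \<Sum>v\<leftarrow>a#xs. f v $$ (i,j)))"
       "j < dim_col (mat M M (\<lambda>(i,j). \<Sum>v\<leftarrow>a#xs. f v $$ (i,j)))"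
    then have "i < M" "j < M" by auto
    then show "foldr (\<lambda>v acc. f v + acc) (a#xs) (0\<^sub>m M M) $$ (i,j) = mat M M (\<lambda>(i,j). \<Sum>v\<leftarrow>a#xs. f v $$ (i,j)) $$ (i,j)"
      using c by (simp add: ih)
  qed (use c ih in simp_all)
qed

lemma msum_eq:
  assumes "finite S" "\<And>v. v \<in> S \<Longrightarrow> f v \<in> carrier_mat M M"
  shows "msum M S f = mat M M (\<lambda>(i,j). \<Sum>v\<in>S. f v $$ (i,j))"
  unfolding msum_def
  using assms by (subst foldr_msum) (simp_all add: sum_list_distinct_conv_sum_set)

lemma qf:
  assumes "H \<in> carrier_mat n n" "x \<in> carrier_vec n"
  shows "scalar_prod (conjugate x) (H *\<^sub>v x) = (\<Sum>i<n. \<Sum>j<n. cnj (x$i) * H$$(i,j) * x$j)"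
  using assms unfolding scalar_prod_def
  by (auto simp: sum_distrib_left mult.assoc lessThan_atLeast0 scalar_prod_def intro!: sum.cong)

lemma herm_carrier[simp]: "H \<in> carrier_mat m n \<Longrightarrow> herm H \<in> carrier_mat n m"
  unfolding herm_def by auto

lemma herm_dims[simp]: "dim_row (herm H) = dim_col H" "dim_col (herm H) = dim_row H"
  unfolding herm_def by auto

lemma herm_index[simp]: "i < dim_col H \<Longrightarrow> j < dim_row H \<Longrightarrow> herm H $$ (i,j) = cnj (H $$ (j,i))"
  unfolding herm_def by auto

lemma psd_iff: "psd n H \<longleftrightarrow> H \<in> carrier_mat n n \<and> (\<forall>i<n. \<forall>j<n. H$$(j,i) = cnj (H$$(i,j))) \<and>
   (\<forall>x\<in>carrier_vec n. 0 \<le> Re (\<Sum>i<n. \<Sum>j<n. cnj (x$i) * H$$(i,j) * x$j))"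
proof
  assume p: "psd n H"
  have c: "H \<in> carrier_mat n n" and h: "herm H = H" 
    and q: "\<forall>x \<in> carrier_vec n. 0 \<le> Re (scalar_prod (conjugate x) (H *\<^sub>v x))"
    using p unfolding psd_def by auto
  have e: "\<forall>i<n. \<forall>j<n. H$$(j,i) = cnj (H$$(i,j))"
  proof (intro allI impI)
    fix i j assume "i < n" "j < n"
    then have "herm H $$ (j,i) = cnj (H$$(i,j))" using c by simp
    then show "H$$(j,i) = cnj (H$$(i,j))" using h by simp
  qed
  have "\<forall>x\<in>carrier_vec n. 0 \<le> Re (\<Sum>i<n. \<Sum>j<n. cnj (x$i) * H$$(i,j) * x$j)"
  proof
    fix x :: "complex vec" assume x: "x \<in> carrier_vec n"
    show "0 \<le> Re (\<Sum>i<n. \<Sum>j<n. cnj (x$i) * H$$(i,j) * x$j)"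
      by (subst qf[OF c x, symmetric]) (use q x in blast)
  qed
  then show "H \<in> carrier_mat n n \<and> (\<forall>i<n. \<forall>j<n. H$$(j,i) = cnj (H$$(i,j))) \<and>
   (\<forall>x\<in>carrier_vec n. 0 \<le> Re (\<Sum>i<n. \<Sum>j<n. cnj (x$i) * H$$(i,j) * x$j))"
    using c e by blast
next
  assume a: "H \<in> carrier_mat n n \<and> (\<forall>i<n. \<forall>j<n. H$$(j,i) = cnj (H$$(i,j))) \<and>
   (\<forall>x\<in>carrier_vec n. 0 \<le> Re (\<Sum>i<n. \<Sum>j<n. cnj (x$i) * H$$(i,j) * x$j))"
  then have c: "H \<in> carrier_mat n n" by blast
  have h: "herm H = H"
  proof (rule eq_matI)
    fix i j assume "i < dim_row H" "j < dim_col H"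
    then have "i < n" "j < n" using c by auto
    then have "H $$ (i,j) = cnj (H $$ (j,i))" using a by blast
    then show "herm H $$ (i,j) = H $$ (i,j)" using c \<open>i < n\<close> \<open>j < n\<close> by simp
  qed (use c in simp_all)
  have "\<forall>x \<in> carrier_vec n. 0 \<le> Re (scalar_prod (conjugate x) (H *\<^sub>v x))"
  proof
    fix x :: "complex vec" assume x: "x \<in> carrier_vec n"
    show "0 \<le> Re (scalar_prod (conjugate x) (H *\<^sub>v x))"
    proof -
      have "0 \<le> Re (\<Sum>i<n. \<Sum>j<n. cnj (x$i) * H$$(i,j) * x$j)" using a x by blast
      then show ?thesis using qf[OF c x] by simp
    qed
  qed
  then show "psd n H" unfolding psd_def using c h by blast
qed

lemma det_map_cnj: "det (map_mat cnj A) = cnj (det A)"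
proof -
  interpret c: comm_ring_hom cnj by unfold_locales auto
  show ?thesis by simp
qed

lemma det_herm: assumes "A \<in> carrier_mat n n" shows "det (herm A) = cnj (det A)"
proof -
  have "herm A = transpose_mat (map_mat cnj A)" using assms by (auto intro!: eq_matI)
  then show ?thesis using det_transpose[of "map_mat cnj A" n] assms det_map_cnj by auto
qed



lemma det_cont:
  fixes F :: "real \<Rightarrow> complex mat"
  assumes "\<And>r. F r \<in> carrier_mat n n" "\<And>i j. i < n \<Longrightarrow> j < n \<Longrightarrow> continuous_on S (\<lambda>r. F r $$ (i,j))"
  shows "continuous_on S (\<lambda>r. det (F r))"
proof -
  have e: "(\<lambda>r. det (F r)) = (\<lambda>r. \<Sum> p \<in> {p. p permutes {0 ..< n}}. 
     signof p * (\<Prod> i = 0 ..< n. F r $$ (i, p i)))" using det_def'[OF assms(1)] by auto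
  show ?thesis unfolding e
  proof (intro continuous_on_sum continuous_on_mult continuous_on_const continuous_on_prod)
    fix p i assume "p \<in> {p. p permutes {0 ..< n}}" "i \<in> {0..<n}"
    then have "i < n" "p i < n" using permutes_in_image[of p "{0..<n}" i] by auto
    then show "continuous_on S (\<lambda>r. F r $$ (i, p i))" by (rule assms(2))
  qed
qed

lemma herm_det_real:
  assumes "A \<in> carrier_mat n n" "herm A = A" shows "Im (det A) = 0"
proof -
  have "cnj (det A) = det A" using det_herm[OF assms(1)] assms(2) by simp
  then show ?thesis by (metis cnj.simps(2) complex.expand neg_equal_zero cnj.simps(1))
qed

lemma re_aux: assumes "A + complex_of_real r * B = 0" shows "Re A + r * Re B = 0"
proof -
  have "Re (A + complex_of_real r * B) = Re A + r * Re B" by simp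
  then show ?thesis using assms by simp
qed

lemma psd_det_nonzero:
  assumes p: "psd n H" and r: "r \<ge> 0"
  shows "det (1\<^sub>m n + complex_of_real r \<cdot>\<^sub>m H) \<noteq> 0"
proof
  assume d: "det (1\<^sub>m n + complex_of_real r \<cdot>\<^sub>m H) = 0"
  have c: "H \<in> carrier_mat n n" and q: "\<forall>x\<in>carrier_vec n. 0 \<le> Re (\<Sum>i<n. \<Sum>j<n. cnj (x$i) * H$$(i,j) * x$j)"
    using p unfolding psd_iff by blast+
  have cA: "1\<^sub>m n + complex_of_real r \<cdot>\<^sub>m H \<in> carrier_mat n n" using c by simp
  obtain v where v: "v \<in> carrier_vec n" "v \<noteq> 0\<^sub>v n" "(1\<^sub>m n + complex_of_real r \<cdot>\<^sub>m H) *\<^sub>v v = 0\<^sub>v n"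
    using d det_0_iff_vec_prod_zero[OF cA] by auto
  have comp: "v$i + complex_of_real r * (\<Sum>j<n. H$$(i,j) * v$j) = 0" if i: "i < n" for i
  proof -
    have "((1\<^sub>m n + complex_of_real r \<cdot>\<^sub>m H) *\<^sub>v v) $ i = 0" using v(3) i by simp
    moreover have "((1\<^sub>m n + complex_of_real r \<cdot>\<^sub>m H) *\<^sub>v v) $ i = 
       (\<Sum>j<n. ((if j = i then 1 else 0) + complex_of_real r * H$$(i,j)) * v$j)"
      using i c v(1) by (simp add: scalar_prod_def lessThan_atLeast0)
    moreover have "(\<Sum>j<n. ((if j = i then 1 else 0) + complex_of_real r * H$$(i,j)) * v$j)
       = v$i + complex_of_real r * (\<Sum>j<n. H$$(i,j) * v$j)"
    proof -
      have "(\<Sum>j<n. ((if j = i then 1 else 0) + complex_of_real r * H$$(i,j)) * v$j)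
         = (\<Sum>j<n. (if j = i then v$j else 0)) + (\<Sum>j<n. complex_of_real r * (H$$(i,j) * v$j))"
        by (subst sum.distrib[symmetric]) (rule sum.cong, auto simp: algebra_simps)
      also have "\<dots> = v$i + complex_of_real r * (\<Sum>j<n. H$$(i,j) * v$j)"
        using i by (simp add: sum_distrib_left)
      finally show ?thesis .
    qed
    ultimately show ?thesis by simp
  qed
  have "(\<Sum>i<n. cnj (v$i) * (v$i + complex_of_real r * (\<Sum>j<n. H$$(i,j) * v$j))) = 0"
    using comp by simp
  then have "(\<Sum>i<n. cnj (v$i) * v$i) + complex_of_real r * (\<Sum>i<n. \<Sum>j<n. cnj (v$i) * H$$(i,j) * v$j) = 0"
    by (simp add: distrib_left sum.distrib sum_distrib_left mult.assoc mult.left_commute)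
  then have "Re (\<Sum>i<n. cnj (v$i) * v$i) + r * Re (\<Sum>i<n. \<Sum>j<n. cnj (v$i) * H$$(i,j) * v$j) = 0"
    by (rule re_aux)
  moreover have "0 \<le> Re (\<Sum>i<n. \<Sum>j<n. cnj (v$i) * H$$(i,j) * v$j)" using q v(1) by blast
  moreover have ee: "Re (\<Sum>i<n. cnj (v$i) * v$i) = (\<Sum>i<n. (cmod (v$i))\<^sup>2)"
  proof -
    have "cnj (v$i) * v$i = complex_of_real ((cmod (v$i))\<^sup>2)" for i
      using complex_norm_square[of "v$i"] by (simp add: mult.commute)
    then have "(\<Sum>i<n. cnj (v$i) * v$i) = complex_of_real (\<Sum>i<n. (cmod (v$i))\<^sup>2)"
      by simp
    then show ?thesis by (simp only: Re_complex_of_real)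
  qed
  ultimately have le: "(\<Sum>i<n. (cmod (v$i))\<^sup>2) \<le> 0" using r
  proof -
    assume a1: "Re (\<Sum>i<n. cnj (v$i) * v$i) + r * Re (\<Sum>i<n. \<Sum>j<n. cnj (v$i) * H$$(i,j) * v$j) = 0"
      and a2: "0 \<le> Re (\<Sum>i<n. \<Sum>j<n. cnj (v$i) * H$$(i,j) * v$j)"
    have "0 \<le> r * Re (\<Sum>i<n. \<Sum>j<n. cnj (v$i) * H$$(i,j) * v$j)" using a2 r by simp
    then show ?thesis using a1 ee by linarith
  qed
  have "(\<Sum>i<n. (cmod (v$i))\<^sup>2) = 0" using le by (simp add: antisym sum_nonneg)
  then have "\<forall>i\<in>{..<n}. (cmod (v$i))\<^sup>2 = 0"
    using sum_nonneg_eq_0_iff[of "{..<n}" "\<lambda>i. (cmod (v$i))\<^sup>2"] by simp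
  then have "v = 0\<^sub>v n" using v(1) by (intro eq_vecI) auto
  then show False using v(2) by simp
qed

lemma psd_det_pos:
  assumes p: "psd n H"
  shows "Re (det (1\<^sub>m n + H)) > 0 \<and> Im (det (1\<^sub>m n + H)) = 0"
proof -
  have c: "H \<in> carrier_mat n n" and h: "herm H = H" using p unfolding psd_def by auto
  define g where "g = (\<lambda>r::real. det (1\<^sub>m n + complex_of_real r \<cdot>\<^sub>m H))"
  have im: "Im (g r) = 0" for r
  proof -
    have "herm (1\<^sub>m n + complex_of_real r \<cdot>\<^sub>m H) = 1\<^sub>m n + complex_of_real r \<cdot>\<^sub>m H"
    proof (rule eq_matI)
      fix i j assume "i < dim_row (1\<^sub>m n + complex_of_real r \<cdot>\<^sub>m H)" "j < dim_col (1\<^sub>m n + complex_of_real r \<cdot>\<^sub>m H)"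
      then have ij: "i < n" "j < n" using c by auto
      have "herm H $$ (i,j) = H $$ (i,j)" using h by simp
      then have "cnj (H $$ (j,i)) = H $$ (i,j)" using ij c by simp
      then show "herm (1\<^sub>m n + complex_of_real r \<cdot>\<^sub>m H) $$ (i,j) = (1\<^sub>m n + complex_of_real r \<cdot>\<^sub>m H) $$ (i,j)"
        using ij c by simp
    qed (use c in simp_all)
    then show ?thesis unfolding g_def by (intro herm_det_real[of _ n]) (use c in simp_all)
  qed
  have nz: "g r \<noteq> 0" if "r \<ge> 0" for r using psd_det_nonzero[OF p that] unfolding g_def by simp
  have cont: "continuous_on {0..1} (\<lambda>r. Re (g r))"
    unfolding g_def
  proof (intro continuous_intros det_cont[where n=n])
    fix r show "1\<^sub>m n + complex_of_real r \<cdot>\<^sub>m H \<in> carrier_mat n n" using c by simp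
  next
    fix i j assume ij: "i < n" "j < n"
    have eq: "(\<lambda>x. (1\<^sub>m n + complex_of_real x \<cdot>\<^sub>m H) $$ (i, j)) = (\<lambda>x. (if i = j then 1 else 0) + complex_of_real x * H $$ (i,j))"
      using ij c by auto
    show "continuous_on {0..1} (\<lambda>x. (1\<^sub>m n + complex_of_real x \<cdot>\<^sub>m H) $$ (i, j))"
      unfolding eq by (intro continuous_intros)
  qed
  have "1\<^sub>m n + 0 \<cdot>\<^sub>m H = 1\<^sub>m n" by (rule eq_matI) (use c in auto)
  then have g0: "Re (g 0) = 1" unfolding g_def by simp
  have "1 \<cdot>\<^sub>m H = H" by (rule eq_matI) auto
  then have g1: "g 1 = det (1\<^sub>m n + H)" unfolding g_def by simp
  have "Re (g 1) > 0"
  proof (rule ccontr)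
    assume "\<not> Re (g 1) > 0"
    then have "Re (g 1) \<le> 0" by simp
    then obtain r where r: "0 \<le> r" "r \<le> 1" "Re (g r) = 0"
      using IVT2'[of "\<lambda>r. Re (g r)" 1 0 0] cont g0 by auto
    then have "g r = 0" using im[of r] by (simp add: complex.expand)
    then show False using nz r by simp
  qed
  then show ?thesis using g1 im[of 1] by simp
qed



lemma det_rank1_affine:
  fixes A :: "complex mat" and u v :: "nat \<Rightarrow> complex"
  assumes A: "A \<in> carrier_mat n n"
  shows "\<exists>D. \<forall>t. det (A + t \<cdot>\<^sub>m mat n n (\<lambda>(i,j). u i * v j)) = det A + t * D"
proof (cases "\<forall>i<n. u i = 0")
  case True
  have "A + t \<cdot>\<^sub>m mat n n (\<lambda>(i,j). u i * v j) = A" for t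
    by (rule eq_matI) (use A True in auto)
  then show ?thesis by (intro exI[of _ 0]) simp
next
  case False
  then obtain k where k: "k < n" "u k \<noteq> 0" by auto
  define R where "R = mat n n (\<lambda>(i,j). u i * v j)"
  define E where "E = mat n n (\<lambda>(i,j). (if j = i then 1 else 0) + (if j = k \<and> i \<noteq> k then - u i / u k else 0) :: complex)"
  define B where "B t = A + t \<cdot>\<^sub>m R" for t
  define C where "C t = E * B t" for t
  have cE: "E \<in> carrier_mat n n" unfolding E_def by simp
  have cR: "R \<in> carrier_mat n n" unfolding R_def by simp
  have cB: "B t \<in> carrier_mat n n" for t unfolding B_def using A cR by simp
  have cC: "C t \<in> carrier_mat n n" for t unfolding C_def using cE cB by (metis mult_carrier_mat)
  have detE: "det E = 1"
  proof -
    have "det E = (\<Sum>j<n. E $$ (k,j) * cofactor E k j)" by (rule laplace_expansion_row[OF cE k(1)])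
    also have "\<dots> = (\<Sum>j<n. (if j = k then cofactor E k j else 0))"
      by (rule sum.cong) (use k in \<open>auto simp: E_def\<close>)
    also have "\<dots> = cofactor E k k" using k by simp
    also have "mat_delete E k k = 1\<^sub>m (n - 1)"
      by (rule eq_matI) (use k in \<open>auto simp: mat_delete_def E_def\<close>)
    then have "cofactor E k k = 1" unfolding cofactor_def
      by (simp add: power_add[symmetric] mult_2[symmetric])
    finally show ?thesis .
  qed
  have Bent: "B t $$ (i,j) = A $$ (i,j) + t * (u i * v j)" if "i < n" "j < n" for t i j
    using that A unfolding B_def R_def by simp
  have Cent: "C t $$ (i,j) = C 0 $$ (i,j) + (if i = k then t * u k * v j else 0)" if ij: "i < n" "j < n" for t i j
  proof -
    have gen: "C s $$ (i,j) = B s $$ (i,j) + (if i \<noteq> k then - u i / u k * B s $$ (k,j) else 0)" for s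
    proof -
      have "C s $$ (i,j) = (\<Sum>l<n. E $$ (i,l) * B s $$ (l,j))"
        unfolding C_def using cE cB[of s] ij by (simp add: scalar_prod_def lessThan_atLeast0)
      also have "\<dots> = (\<Sum>l<n. (if l = i then B s $$ (l,j) else 0) + (if l = k \<and> i \<noteq> k then - u i / u k * B s $$ (l,j) else 0))"
        by (rule sum.cong) (use ij in \<open>auto simp: E_def algebra_simps\<close>)
      also have "\<dots> = B s $$ (i,j) + (if i \<noteq> k then - u i / u k * B s $$ (k,j) else 0)"
        using ij k by (simp add: sum.distrib)
      finally show ?thesis .
    qed
    show ?thesis
      using k ij by (simp add: gen Bent field_simps)
  qed
  have del: "mat_delete (C t) k j = mat_delete (C 0) k j" for t j
  proof (rule eq_matI)
    fix i' j' assume "i' < dim_row (mat_delete (C 0) k j)" "j' < dim_col (mat_delete (C 0) k j)"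
    then have "i' < n - 1" "j' < n - 1" using cC[of 0] by auto
    then show "mat_delete (C t) k j $$ (i',j') = mat_delete (C 0) k j $$ (i',j')"
      unfolding mat_delete_def using cC[of t] cC[of 0] Cent[of _ _ t] by auto
  qed (use cC[of t] cC[of 0] in auto)
  define D where "D = (\<Sum>j<n. u k * v j * cofactor (C 0) k j)"
  have 1: "det (B t) = det (C t)" for t
  proof -
    have "det (C t) = det E * det (B t)" unfolding C_def by (rule det_mult[OF cE cB])
    then show ?thesis using detE by simp
  qed
  have "det (A + t \<cdot>\<^sub>m R) = det A + t * D" for t
  proof -
    have "det (C t) = (\<Sum>j<n. C t $$ (k,j) * cofactor (C t) k j)" by (rule laplace_expansion_row[OF cC k(1)])
    also have "\<dots> = (\<Sum>j<n. C 0 $$ (k,j) * cofactor (C 0) k j + t * (u k * v j * cofactor (C 0) k j))"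
      by (rule sum.cong) (use k Cent[of _ _ t] del[of t] in \<open>auto simp: cofactor_def algebra_simps\<close>)
    also have "\<dots> = det (C 0) + t * D"
      unfolding D_def sum.distrib sum_distrib_left[symmetric] laplace_expansion_row[OF cC k(1), symmetric] ..
    also have "det (C 0) = det (B 0)" using 1[of 0] by simp
    also have "B 0 = A" unfolding B_def by (rule eq_matI) (use A cR in auto)
    finally show ?thesis using 1 unfolding B_def by simp
  qed
  then show ?thesis unfolding R_def by blast
qed



lemma psd_add:
  assumes "psd n A" "psd n B" shows "psd n (A + B)"
proof -
  have cA: "A \<in> carrier_mat n n" and hA: "\<forall>i<n. \<forall>j<n. A$$(j,i) = cnj (A$$(i,j))"
    and qA: "\<forall>x\<in>carrier_vec n. 0 \<le> Re (\<Sum>i<n. \<Sum>j<n. cnj (x$i) * A$$(i,j) * x$j)"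
    using assms(1) unfolding psd_iff by blast+
  have cB: "B \<in> carrier_mat n n" and hB: "\<forall>i<n. \<forall>j<n. B$$(j,i) = cnj (B$$(i,j))"
    and qB: "\<forall>x\<in>carrier_vec n. 0 \<le> Re (\<Sum>i<n. \<Sum>j<n. cnj (x$i) * B$$(i,j) * x$j)"
    using assms(2) unfolding psd_iff by blast+
  have e: "(A + B) $$ (i,j) = A$$(i,j) + B$$(i,j)" if "i < n" "j < n" for i j
    using that cA cB by simp
  show ?thesis unfolding psd_iff
  proof (intro conjI allI impI ballI)
    show "A + B \<in> carrier_mat n n" using cA cB by simp
  next
    fix i j assume ij: "i < n" "j < n"
    show "(A + B) $$ (j,i) = cnj ((A + B) $$ (i,j))"
    proof -
      have "A$$(j,i) = cnj (A$$(i,j))" "B$$(j,i) = cnj (B$$(i,j))" using hA hB ij by blast+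
      then show ?thesis using e ij by simp
    qed
  next
    fix x :: "complex vec" assume x: "x \<in> carrier_vec n"
    have "(\<Sum>i<n. \<Sum>j<n. cnj (x$i) * (A + B)$$(i,j) * x$j) =
      (\<Sum>i<n. \<Sum>j<n. cnj (x$i) * A$$(i,j) * x$j) + (\<Sum>i<n. \<Sum>j<n. cnj (x$i) * B$$(i,j) * x$j)"
      by (simp add: e sum.distrib[symmetric] algebra_simps)
    then show "0 \<le> Re (\<Sum>i<n. \<Sum>j<n. cnj (x$i) * (A + B)$$(i,j) * x$j)"
      using qA qB x by simp
  qed
qed

lemma psd_smult:
  assumes "psd n A" "c \<ge> 0" shows "psd n (complex_of_real c \<cdot>\<^sub>m A)"
proof -
  have cA: "A \<in> carrier_mat n n" and hA: "\<forall>i<n. \<forall>j<n. A$$(j,i) = cnj (A$$(i,j))"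
    and qA: "\<forall>x\<in>carrier_vec n. 0 \<le> Re (\<Sum>i<n. \<Sum>j<n. cnj (x$i) * A$$(i,j) * x$j)"
    using assms(1) unfolding psd_iff by blast+
  have e: "(complex_of_real c \<cdot>\<^sub>m A) $$ (i,j) = complex_of_real c * A$$(i,j)" if "i < n" "j < n" for i j
    using that cA by simp
  show ?thesis unfolding psd_iff
  proof (intro conjI allI impI ballI)
    show "complex_of_real c \<cdot>\<^sub>m A \<in> carrier_mat n n" using cA by simp
  next
    fix i j assume ij: "i < n" "j < n"
    show "(complex_of_real c \<cdot>\<^sub>m A) $$ (j,i) = cnj ((complex_of_real c \<cdot>\<^sub>m A) $$ (i,j))"
    proof -
      have "A$$(j,i) = cnj (A$$(i,j))" using hA ij by blast
      then show ?thesis using e ij by simp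
    qed
  next
    fix x :: "complex vec" assume x: "x \<in> carrier_vec n"
    have "(\<Sum>i<n. \<Sum>j<n. cnj (x$i) * (complex_of_real c \<cdot>\<^sub>m A)$$(i,j) * x$j) =
      complex_of_real c * (\<Sum>i<n. \<Sum>j<n. cnj (x$i) * A$$(i,j) * x$j)"
      by (simp add: e sum_distrib_left algebra_simps)
    then show "0 \<le> Re (\<Sum>i<n. \<Sum>j<n. cnj (x$i) * (complex_of_real c \<cdot>\<^sub>m A)$$(i,j) * x$j)"
      using qA x assms(2) by simp
  qed
qed

lemma psd_rank1:
  "psd n (mat n n (\<lambda>(i,j). u i * cnj (u j)))"
  unfolding psd_iff
proof (intro conjI allI impI ballI)
  fix x :: "complex vec" assume x: "x \<in> carrier_vec n"
  define a where "a i = cnj (x$i) * u i" for i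
  have "(\<Sum>i<n. \<Sum>j<n. cnj (x$i) * mat n n (\<lambda>(i,j). u i * cnj (u j)) $$ (i,j) * x$j)
     = (\<Sum>i<n. \<Sum>j<n. a i * cnj (a j))"
    by (rule sum.cong, simp, rule sum.cong, simp, simp add: a_def algebra_simps)
  also have "\<dots> = (\<Sum>i<n. a i) * cnj (\<Sum>j<n. a j)"
    by (simp add: sum_product)
  also have "\<dots> = complex_of_real ((cmod (\<Sum>i<n. a i))\<^sup>2)"
    using complex_norm_square[of "\<Sum>i<n. a i"] by (simp add: cnj_sum)
  finally show "0 \<le> Re (\<Sum>i<n. \<Sum>j<n. cnj (x$i) * mat n n (\<lambda>(i,j). u i * cnj (u j)) $$ (i,j) * x$j)"
    by simp
qed auto

lemma herm_mult:
  assumes "A \<in> carrier_mat m n" "B \<in> carrier_mat n p"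
  shows "herm (A * B) = herm B * herm A"
  by (rule eq_matI) (use assms in \<open>auto simp: scalar_prod_def sum_conjugate mult.commute\<close>)

lemma herm_herm: "herm (herm A) = A"
  by (rule eq_matI) auto

lemma adjoint_sprod:
  assumes G: "G \<in> carrier_mat m n" and x: "x \<in> carrier_vec m" and z: "z \<in> carrier_vec n"
  shows "scalar_prod (conjugate x) (G *\<^sub>v z) = scalar_prod (conjugate (herm G *\<^sub>v x)) z"
proof -
  have "scalar_prod (conjugate x) (G *\<^sub>v z) = (\<Sum>i<m. cnj (x$i) * (\<Sum>k<n. G$$(i,k) * z$k))"
    using assms by (simp add: scalar_prod_def lessThan_atLeast0)
  also have "\<dots> = (\<Sum>i<m. \<Sum>k<n. G$$(i,k) * cnj (x$i) * z$k)"
    by (simp add: sum_distrib_left algebra_simps)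
  also have "\<dots> = (\<Sum>k<n. \<Sum>i<m. G$$(i,k) * cnj (x$i) * z$k)"
    by (rule sum.swap)
  also have "\<dots> = (\<Sum>k<n. cnj (\<Sum>i<m. cnj (G$$(i,k)) * x$i) * z$k)"
    by (simp add: sum_distrib_right)
  also have "\<dots> = scalar_prod (conjugate (herm G *\<^sub>v x)) z"
    using assms by (simp add: scalar_prod_def lessThan_atLeast0)
  finally show ?thesis .
qed

lemma psd_conj:
  assumes G: "G \<in> carrier_mat m n" and Q: "psd n Q"
  shows "psd m (G * Q * herm G)"
proof -
  have cQ: "Q \<in> carrier_mat n n" and hQ: "herm Q = Q"
    and qQ: "\<forall>x\<in>carrier_vec n. 0 \<le> Re (scalar_prod (conjugate x) (Q *\<^sub>v x))"
    using Q unfolding psd_def by blast+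
  have hG: "herm G \<in> carrier_mat n m" using G by simp
  have GQ: "G * Q \<in> carrier_mat m n" using G cQ by (rule mult_carrier_mat)
  have c: "G * Q * herm G \<in> carrier_mat m m" using GQ hG by (rule mult_carrier_mat)
  have h: "herm (G * Q * herm G) = G * Q * herm G"
  proof -
    have "herm (G * Q * herm G) = herm (herm G) * herm (G * Q)"
      by (rule herm_mult) (use G cQ in auto)
    also have "herm (G * Q) = herm Q * herm G" by (rule herm_mult) (use G cQ in auto)
    finally show ?thesis using G cQ hQ hG by (simp add: herm_herm assoc_mult_mat[of G m n Q n "herm G" m])
  qed
  have "0 \<le> Re (scalar_prod (conjugate x) ((G * Q * herm G) *\<^sub>v x))" if x: "x \<in> carrier_vec m" for x
  proof -
    have hx: "herm G *\<^sub>v x \<in> carrier_vec n" using hG x by (rule mult_mat_vec_carrier)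
    have "(G * Q * herm G) *\<^sub>v x = G *\<^sub>v (Q *\<^sub>v (herm G *\<^sub>v x))"
      using G cQ x hG GQ hx by (simp add: assoc_mult_mat_vec[of "G * Q" m n "herm G" m x] assoc_mult_mat_vec[of G m n Q n])
    then have "scalar_prod (conjugate x) ((G * Q * herm G) *\<^sub>v x) =
       scalar_prod (conjugate (herm G *\<^sub>v x)) (Q *\<^sub>v (herm G *\<^sub>v x))"
      using adjoint_sprod[OF G x, of "Q *\<^sub>v (herm G *\<^sub>v x)"] cQ hx by simp
    then show ?thesis using qQ hx by simp
  qed
  then show ?thesis unfolding psd_def using c h by blast
qed



lemma det_mono:
  fixes u :: "nat \<Rightarrow> complex"
  assumes H: "psd n H" and s: "0 \<le> s" "s \<le> t"
  shows "0 < Re (det (H + complex_of_real s \<cdot>\<^sub>m mat n n (\<lambda>(i,j). u i * cnj (u j)) + 1\<^sub>m n)) \<and>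
     Re (det (H + complex_of_real s \<cdot>\<^sub>m mat n n (\<lambda>(i,j). u i * cnj (u j)) + 1\<^sub>m n))
     \<le> Re (det (H + complex_of_real t \<cdot>\<^sub>m mat n n (\<lambda>(i,j). u i * cnj (u j)) + 1\<^sub>m n))"
proof -
  define R where "R = mat n n (\<lambda>(i,j). u i * cnj (u j))"
  have cH: "H \<in> carrier_mat n n" using H unfolding psd_def by blast
  have cR: "R \<in> carrier_mat n n" unfolding R_def by simp
  define X where "X = 1\<^sub>m n + H"
  have cX: "X \<in> carrier_mat n n" unfolding X_def using cH by simp
  obtain D where D: "\<And>c. det (X + c \<cdot>\<^sub>m R) = det X + c * D"
    using det_rank1_affine[OF cX, of u "\<lambda>j. cnj (u j)"] unfolding R_def by blast
  have eq1: "H + c \<cdot>\<^sub>m R + 1\<^sub>m n = X + c \<cdot>\<^sub>m R" for c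
    unfolding X_def by (rule eq_matI) (use cH cR in auto)
  have eq2: "H + c \<cdot>\<^sub>m R + 1\<^sub>m n = 1\<^sub>m n + (H + c \<cdot>\<^sub>m R)" for c
    by (rule eq_matI) (use cH cR in auto)
  have pos: "0 < Re (det X) + c * Re D" if c: "c \<ge> 0" for c
  proof -
    have "psd n (H + complex_of_real c \<cdot>\<^sub>m R)"
      unfolding R_def by (intro psd_add psd_smult psd_rank1 H c)
    then have "0 < Re (det (1\<^sub>m n + (H + complex_of_real c \<cdot>\<^sub>m R)))" using psd_det_pos by blast
    then have "0 < Re (det X + complex_of_real c * D)" using eq1 eq2 D by metis
    then show ?thesis by simp
  qed
  have "Re (det X) > 0" using pos[of 0] by simp
  have RD: "Re D \<ge> 0"
  proof (rule ccontr)
    assume "\<not> Re D \<ge> 0"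
    then have neg: "Re D < 0" by simp
    define c where "c = Re (det X) / (- Re D) + 1"
    have c0: "c \<ge> 0" unfolding c_def using neg \<open>Re (det X) > 0\<close> by (simp add: divide_nonneg_pos)
    have "c * Re D = - Re (det X) + Re D" unfolding c_def using neg by (simp add: field_simps)
    then show False using pos[OF c0] neg by linarith
  qed
  have val: "Re (det (H + complex_of_real c \<cdot>\<^sub>m R + 1\<^sub>m n)) = Re (det X) + c * Re D" for c
    using eq1 D by simp
  show ?thesis unfolding R_def[symmetric] val using pos[OF s(1)] RD s by (simp add: mult_right_mono)
qed

lemma qf_real:
  assumes Q: "psd N Q"
  shows "Im (\<Sum>k<N. \<Sum>l<N. cnj (T k) * Q$$(k,l) * T l) = 0"
proof -
  have h: "\<forall>i<N. \<forall>j<N. Q$$(j,i) = cnj (Q$$(i,j))" using Q unfolding psd_iff by blast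
  have "cnj (\<Sum>k<N. \<Sum>l<N. cnj (T k) * Q$$(k,l) * T l) = (\<Sum>k<N. \<Sum>l<N. T k * cnj (Q$$(k,l)) * cnj (T l))"
    by simp
  also have "\<dots> = (\<Sum>k<N. \<Sum>l<N. T k * Q$$(l,k) * cnj (T l))"
  proof (intro sum.cong refl)
    fix k l assume "k \<in> {..<N}" "l \<in> {..<N}"
    then have "Q$$(l,k) = cnj (Q$$(k,l))" using h by blast
    then show "T k * cnj (Q$$(k,l)) * cnj (T l) = T k * Q$$(l,k) * cnj (T l)" by simp
  qed
  also have "\<dots> = (\<Sum>l<N. \<Sum>k<N. T k * Q$$(l,k) * cnj (T l))" by (rule sum.swap)
  also have "\<dots> = (\<Sum>k<N. \<Sum>l<N. cnj (T k) * Q$$(k,l) * T l)"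
    by (simp add: mult.commute mult.left_commute)
  finally have "Im (cnj (\<Sum>k<N. \<Sum>l<N. cnj (T k) * Q$$(k,l) * T l)) = Im (\<Sum>k<N. \<Sum>l<N. cnj (T k) * Q$$(k,l) * T l)"
    by (rule arg_cong)
  then show ?thesis by (simp only: cnj.sel)
qed

lemma dsum:
  fixes N a b :: nat
  assumes "a < N" "b < N"
  shows "(\<Sum>k<N. \<Sum>l<N. if k = a then if l = b then f k l else 0 else 0) = (f a b :: complex)"
proof -
  have "(\<Sum>l<N. if k = a then if l = b then f k l else 0 else 0) = (if k = a then f k b else 0)" for k
    using assms by (cases "k = a") (auto simp: sum.delta)
  then show ?thesis using assms by (simp add: sum.delta)
qed

lemma qf_bound:
  assumes Q: "psd N Q" and T: "(\<Sum>k<N. (cmod (T k))\<^sup>2) = 1"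
  shows "0 \<le> Re (\<Sum>k<N. \<Sum>l<N. cnj (T k) * Q$$(k,l) * T l) \<and>
         Re (\<Sum>k<N. \<Sum>l<N. cnj (T k) * Q$$(k,l) * T l) \<le> Re (mtrace Q)"
proof -
  have cQ: "Q \<in> carrier_mat N N" and h: "\<forall>i<N. \<forall>j<N. Q$$(j,i) = cnj (Q$$(i,j))"
    and q: "\<forall>x\<in>carrier_vec N. 0 \<le> Re (\<Sum>i<N. \<Sum>j<N. cnj (x$i) * Q$$(i,j) * x$j)"
    using Q unfolding psd_iff by blast+
  define s where "s = (\<Sum>k<N. \<Sum>l<N. cnj (T k) * Q$$(k,l) * T l)"
  have s0: "0 \<le> Re s" unfolding s_def using q[rule_format, of "vec N T"] by simp
  have tr: "mtrace Q = (\<Sum>i<N. Q$$(i,i))" unfolding mtrace_def using cQ by simp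
  define y where "y i j = vec N (\<lambda>k. (if k = i then cnj (T j) else 0) - (if k = j then cnj (T i) else 0))" for i j
  have yc: "y i j \<in> carrier_vec N" for i j unfolding y_def by simp
  have qy: "(\<Sum>k<N. \<Sum>l<N. cnj (y i j $ k) * Q$$(k,l) * y i j $ l) =
      T j * cnj (T j) * Q$$(i,i) + T i * cnj (T i) * Q$$(j,j) - T j * cnj (T i) * Q$$(i,j) - T i * cnj (T j) * Q$$(j,i)"
    if ij: "i < N" "j < N" for i j
  proof -
    have "(\<Sum>k<N. \<Sum>l<N. cnj (y i j $ k) * Q$$(k,l) * y i j $ l) =
      (\<Sum>k<N. \<Sum>l<N. (if k = i then (if l = i then T j * Q$$(k,l) * cnj (T j) else 0) else 0)
                     + (if k = j then (if l = j then T i * Q$$(k,l) * cnj (T i) else 0) else 0)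
                     - (if k = i then (if l = j then T j * Q$$(k,l) * cnj (T i) else 0) else 0)
                     - (if k = j then (if l = i then T i * Q$$(k,l) * cnj (T j) else 0) else 0))"
      by (intro sum.cong refl) (auto simp: y_def algebra_simps)
    also have "\<dots> = T j * cnj (T j) * Q$$(i,i) + T i * cnj (T i) * Q$$(j,j) - T j * cnj (T i) * Q$$(i,j) - T i * cnj (T j) * Q$$(j,i)"
      using ij by (simp add: sum.distrib sum_subtractf dsum)
    finally show ?thesis .
  qed
  have nrm: "T j * cnj (T j) = complex_of_real ((cmod (T j))\<^sup>2)" for j
    using complex_norm_square[of "T j"] by simp
  have nrm': "(\<Sum>j<N. T j * cnj (T j)) = 1"
  proof -
    have "(\<Sum>j<N. T j * cnj (T j)) = complex_of_real (\<Sum>j<N. (cmod (T j))\<^sup>2)"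
      by (simp add: nrm)
    then show ?thesis using T by simp
  qed
  have "(\<Sum>i<N. \<Sum>j<N. (\<Sum>k<N. \<Sum>l<N. cnj (y i j $ k) * Q$$(k,l) * y i j $ l)) =
     (\<Sum>i<N. \<Sum>j<N. T j * cnj (T j) * Q$$(i,i) + T i * cnj (T i) * Q$$(j,j) - T j * cnj (T i) * Q$$(i,j) - T i * cnj (T j) * Q$$(j,i))"
    by (intro sum.cong refl) (simp add: qy)
  also have "\<dots> = (\<Sum>i<N. \<Sum>j<N. T j * cnj (T j) * Q$$(i,i)) + (\<Sum>i<N. \<Sum>j<N. T i * cnj (T i) * Q$$(j,j))
     - (\<Sum>i<N. \<Sum>j<N. T j * cnj (T i) * Q$$(i,j)) - (\<Sum>i<N. \<Sum>j<N. T i * cnj (T j) * Q$$(j,i))"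
    by (simp add: sum.distrib sum_subtractf)
  also have "(\<Sum>i<N. \<Sum>j<N. T j * cnj (T j) * Q$$(i,i)) = mtrace Q"
  proof -
    have "(\<Sum>i<N. \<Sum>j<N. T j * cnj (T j) * Q$$(i,i)) = (\<Sum>i<N. (\<Sum>j<N. T j * cnj (T j)) * Q$$(i,i))"
      by (simp add: sum_distrib_right)
    then show ?thesis unfolding tr by (simp add: nrm')
  qed
  also have "(\<Sum>i<N. \<Sum>j<N. T i * cnj (T i) * Q$$(j,j)) = mtrace Q"
  proof -
    have "(\<Sum>i<N. \<Sum>j<N. T i * cnj (T i) * Q$$(j,j)) = (\<Sum>i<N. T i * cnj (T i) * (\<Sum>j<N. Q$$(j,j)))"
      by (simp add: sum_distrib_left)
    also have "\<dots> = (\<Sum>i<N. T i * cnj (T i)) * (\<Sum>j<N. Q$$(j,j))"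
      by (simp add: sum_distrib_right)
    finally show ?thesis unfolding tr by (simp add: nrm')
  qed
  also have "(\<Sum>i<N. \<Sum>j<N. T j * cnj (T i) * Q$$(i,j)) = s"
    unfolding s_def by (simp add: algebra_simps)
  also have "(\<Sum>i<N. \<Sum>j<N. T i * cnj (T j) * Q$$(j,i)) = s"
    unfolding s_def by (subst sum.swap) (simp add: algebra_simps)
  finally have id: "(\<Sum>i<N. \<Sum>j<N. (\<Sum>k<N. \<Sum>l<N. cnj (y i j $ k) * Q$$(k,l) * y i j $ l)) = mtrace Q + mtrace Q - s - s" .
  define Z where "Z i j = (\<Sum>k<N. \<Sum>l<N. cnj (y i j $ k) * Q$$(k,l) * y i j $ l)" for i j
  have Z0: "0 \<le> Re (Z i j)" for i j unfolding Z_def using q yc by blast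
  have "0 \<le> Re (\<Sum>i<N. \<Sum>j<N. Z i j)"
    unfolding Re_sum by (intro sum_nonneg Z0)
  then have "0 \<le> Re (\<Sum>i<N. \<Sum>j<N. (\<Sum>k<N. \<Sum>l<N. cnj (y i j $ k) * Q$$(k,l) * y i j $ l))"
    unfolding Z_def .
  then have "Re s \<le> Re (mtrace Q)" unfolding id by simp
  then show ?thesis using s0 unfolding s_def by simp
qed



lemma chan_carrier: "chan M lam N L g \<beta> \<theta> w \<in> carrier_mat M N"
  unfolding carrier_mat_def chan_def by (simp add: AR_def Gam_def AT_def herm_def)

lemma GQG_carrier: "Q \<in> carrier_mat N N \<Longrightarrow> chan M lam N L g \<beta> \<theta> w * Q * herm (chan M lam N L g \<beta> \<theta> w) \<in> carrier_mat M M"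
  using chan_carrier[of M lam N L g \<beta> \<theta> w]
  by (metis herm_carrier mult_carrier_mat)

lemma chan1_ent:
  assumes "i < M" "k < N"
  shows "chan M lam N 1 g \<beta> \<theta> w $$ (i,k) =
    complex_of_real (sqrt (real M * real N)) * (aR M lam (\<beta> 0) $$ (i,0) * g 0 * cnj (AT N lam 1 \<theta> w $$ (k,0)))"
  using assms unfolding chan_def by (simp add: AR_def Gam_def aR_def AT_def scalar_prod_def)

lemma aR_outer:
  "aR M lam b * herm (aR M lam b) = mat M M (\<lambda>(i,j). aR M lam b $$ (i,0) * cnj (aR M lam b $$ (j,0)))"
  by (rule eq_matI) (auto simp: aR_def scalar_prod_def)

lemma user_u:
  assumes Q: "Q \<in> carrier_mat N N"
  shows "chan M lam N 1 g \<beta> \<theta> w * Q * herm (chan M lam N 1 g \<beta> \<theta> w) =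
    (complex_of_real (real M * real N * (cmod (g 0))\<^sup>2) *
      (\<Sum>k<N. \<Sum>l<N. cnj (AT N lam 1 \<theta> w $$ (k,0)) * Q$$(k,l) * AT N lam 1 \<theta> w $$ (l,0)))
     \<cdot>\<^sub>m (aR M lam (\<beta> 0) * herm (aR M lam (\<beta> 0)))"
proof -
  define G where "G = chan M lam N 1 g \<beta> \<theta> w"
  define a where "a i = aR M lam (\<beta> 0) $$ (i,0)" for i
  define T where "T k = AT N lam 1 \<theta> w $$ (k,0)" for k
  define c where "c = complex_of_real (sqrt (real M * real N))"
  have cG: "G \<in> carrier_mat M N" unfolding G_def by (rule chan_carrier)
  have Ge: "G $$ (i,k) = c * (a i * g 0 * cnj (T k))" if "i < M" "k < N" for i k
    unfolding G_def a_def T_def c_def using chan1_ent[OF that] .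
  have cc: "c * cnj c = complex_of_real (real M * real N)"
  proof -
    have "c * cnj c = complex_of_real (sqrt (real M * real N) * sqrt (real M * real N))" unfolding c_def
      by (simp only: complex_cnj_complex_of_real of_real_mult)
    also have "sqrt (real M * real N) * sqrt (real M * real N) = real M * real N" by simp
    finally show ?thesis .
  qed
  have gg: "g 0 * cnj (g 0) = complex_of_real ((cmod (g 0))\<^sup>2)"
    using complex_norm_square[of "g 0"] by simp
  have "G * Q * herm G = (complex_of_real (real M * real N * (cmod (g 0))\<^sup>2) *
      (\<Sum>k<N. \<Sum>l<N. cnj (T k) * Q$$(k,l) * T l)) \<cdot>\<^sub>m mat M M (\<lambda>(i,j). a i * cnj (a j))"
  proof (rule eq_matI)
    fix i j assume "i < dim_row (( complex_of_real (real M * real N * (cmod (g 0))\<^sup>2) *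
      (\<Sum>k<N. \<Sum>l<N. cnj (T k) * Q$$(k,l) * T l)) \<cdot>\<^sub>m mat M M (\<lambda>(i,j). a i * cnj (a j)))"
      "j < dim_col (( complex_of_real (real M * real N * (cmod (g 0))\<^sup>2) *
      (\<Sum>k<N. \<Sum>l<N. cnj (T k) * Q$$(k,l) * T l)) \<cdot>\<^sub>m mat M M (\<lambda>(i,j). a i * cnj (a j)))"
    then have ij: "i < M" "j < M" by auto
    have "(G * Q * herm G) $$ (i,j) = (\<Sum>l<N. (\<Sum>k<N. G$$(i,k) * Q$$(k,l)) * cnj (G$$(j,l)))"
      using cG Q ij by (simp add: scalar_prod_def lessThan_atLeast0)
    also have "\<dots> = (\<Sum>l<N. \<Sum>k<N. (c * cnj c) * (g 0 * cnj (g 0)) * (a i * cnj (a j)) * (cnj (T k) * Q$$(k,l) * T l))"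
      by (intro sum.cong refl) (simp add: Ge ij sum_distrib_right sum_distrib_left mult_ac)
    also have "\<dots> = (c * cnj c) * (g 0 * cnj (g 0)) * (a i * cnj (a j)) * (\<Sum>l<N. \<Sum>k<N. cnj (T k) * Q$$(k,l) * T l)"
      by (simp add: sum_distrib_left)
    also have "(\<Sum>l<N. \<Sum>k<N. cnj (T k) * Q$$(k,l) * T l) = (\<Sum>k<N. \<Sum>l<N. cnj (T k) * Q$$(k,l) * T l)"
      by (rule sum.swap)
    finally show "(G * Q * herm G) $$ (i,j) = (( complex_of_real (real M * real N * (cmod (g 0))\<^sup>2) *
      (\<Sum>k<N. \<Sum>l<N. cnj (T k) * Q$$(k,l) * T l)) \<cdot>\<^sub>m mat M M (\<lambda>(i,j). a i * cnj (a j))) $$ (i,j)"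
      using ij by (simp add: cc gg algebra_simps)
  qed (use cG Q in auto)
  then show ?thesis unfolding G_def T_def a_def aR_outer .
qed

lemma T_norm:
  assumes "N \<ge> 1"
  shows "(\<Sum>k<N. (cmod (AT N lam 1 \<theta> w $$ (k,0)))\<^sup>2) = 1"
proof -
  have "(cmod (AT N lam 1 \<theta> w $$ (k,0)))\<^sup>2 = 1 / real N" if "k < N" for k
  proof -
    have "AT N lam 1 \<theta> w $$ (k,0) = complex_of_real (1 / sqrt (real N)) * cis (- (2 * pi / lam) * (w $ k) * cos (\<theta> 0))"
      using that unfolding AT_def by simp
    then have "cmod (AT N lam 1 \<theta> w $$ (k,0)) = 1 / sqrt (real N)"
      by (simp only: norm_mult norm_of_real norm_cis) simp
    then show ?thesis using assms by (simp add: power_divide)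
  qed
  then have "(\<Sum>k<N. (cmod (AT N lam 1 \<theta> w $$ (k,0)))\<^sup>2) = (\<Sum>k<N. 1 / real N)" by simp
  then show ?thesis using assms by simp
qed



lemma Sup_eq_dom:
  fixes A B :: "real set"
  assumes "\<forall>x\<in>A. \<exists>y\<in>B. x \<le> y" "\<forall>y\<in>B. \<exists>x\<in>A. y \<le> x"
  shows "Sup A = Sup B"
proof -
  have "(\<forall>x\<in>A. x \<le> z) \<longleftrightarrow> (\<forall>x\<in>B. x \<le> z)" for z
    using assms by (meson order_trans)
  then show ?thesis unfolding Sup_real_def by simp
qed

lemma psd_zero: "psd n (0\<^sub>m n n)"
  unfolding psd_iff by simp

lemma psd_foldr:
  assumes "\<And>v. v \<in> set xs \<Longrightarrow> psd M (f v)"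
  shows "psd M (foldr (\<lambda>v acc. f v + acc) xs (0\<^sub>m M M))"
  using assms
proof (induction xs)
  case Nil then show ?case by (simp add: psd_zero)
next
  case (Cons a xs)
  then show ?case by (simp add: psd_add)
qed

lemma psd_msum:
  assumes "\<And>v. v \<in> S \<Longrightarrow> psd M (f v)" "finite S"
  shows "psd M (msum M S f)"
  unfolding msum_def by (rule psd_foldr) (use assms in simp)

lemma msum_cong:
  assumes "\<And>v. v \<in> S \<Longrightarrow> f v = g v" "finite S"
  shows "msum M S f = msum M S g"
  unfolding msum_def by (rule foldr_cong) (use assms in auto)

lemma msum_carrier:
  assumes "\<And>v. v \<in> S \<Longrightarrow> f v \<in> carrier_mat M M" "finite S"
  shows "msum M S f \<in> carrier_mat M M"
  using msum_eq[OF assms(2) assms(1)] by simp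

lemma msum_remove:
  assumes "finite S" "u \<in> S" "\<And>v. v \<in> S \<Longrightarrow> f v \<in> carrier_mat M M"
  shows "msum M S f = f u + msum M (S - {u}) f"
proof -
  have a: "msum M S f = mat M M (\<lambda>(i,j). \<Sum>v\<in>S. f v $$ (i,j))" by (rule msum_eq) (use assms in auto)
  have b: "msum M (S - {u}) f = mat M M (\<lambda>(i,j). \<Sum>v\<in>S - {u}. f v $$ (i,j))" by (rule msum_eq) (use assms in auto)
  have cu: "f u \<in> carrier_mat M M" using assms by auto
  show ?thesis unfolding a b
    by (rule eq_matI) (use assms cu in \<open>auto simp: sum.remove\<close>)
qed

lemma pos_exists:
  assumes "W > 0" "N \<ge> 1"
  shows "pos_ok N W (vec N (\<lambda>n. W * real n / real N))"
  unfolding pos_ok_def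
proof (intro conjI allI impI)
  fix n assume n: "n < N"
  show "0 \<le> vec N (\<lambda>n. W * real n / real N) $ n" using n assms by simp
  show "vec N (\<lambda>n. W * real n / real N) $ n \<le> W" using n assms
    by (simp add: divide_le_eq)
next
  fix n n' assume "n < N" "n' < N" "n \<noteq> n'"
  then show "vec N (\<lambda>n. W * real n / real N) $ n \<noteq> vec N (\<lambda>n. W * real n / real N) $ n'"
    using assms by (simp add: divide_right_mono)
qed simp



theorem lemma1:
  fixes U M :: nat and lam :: real
    and N L :: "nat \<Rightarrow> nat" and P W :: "nat \<Rightarrow> real"
    and \<gamma> :: "nat \<Rightarrow> nat \<Rightarrow> complex" and \<beta> \<theta> :: "nat \<Rightarrow> nat \<Rightarrow> real"
    and u :: nat
  assumes "M \<ge> 1" and "lam > 0"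
    and "\<And>v. v \<in> {1..U} \<Longrightarrow> N v \<ge> 1"
    and "\<And>v. v \<in> {1..U} \<Longrightarrow> L v \<ge> 1"
    and "\<And>v. v \<in> {1..U} \<Longrightarrow> P v > 0"
    and "\<And>v. v \<in> {1..U} \<Longrightarrow> W v > 0"
    and "\<And>v l. v \<in> {1..U} \<Longrightarrow> l < L v \<Longrightarrow> 0 \<le> \<beta> v l \<and> \<beta> v l \<le> pi"
    and "\<And>v l. v \<in> {1..U} \<Longrightarrow> l < L v \<Longrightarrow> 0 \<le> \<theta> v l \<and> \<theta> v l \<le> pi"
    and "u \<in> {1..U}" and "L u = 1"
  shows
   "Sup {ln (Re (det (msum M {1..U}
            (\<lambda>v. chan M lam (N v) (L v) (\<gamma> v) (\<beta> v) (\<theta> v) (w v) * Q v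
                 * herm (chan M lam (N v) (L v) (\<gamma> v) (\<beta> v) (\<theta> v) (w v)))
           + 1\<^sub>m M)))
        | Q w. \<forall>v \<in> {1..U}. cov_ok (N v) (P v) (Q v) \<and> pos_ok (N v) (W v) (w v)}
  = Sup {ln (Re (det (msum M ({1..U} - {u})
            (\<lambda>v. chan M lam (N v) (L v) (\<gamma> v) (\<beta> v) (\<theta> v) (w v) * Q v
                 * herm (chan M lam (N v) (L v) (\<gamma> v) (\<beta> v) (\<theta> v) (w v)))
           + complex_of_real (real M * real (N u) * P u * (cmod (\<gamma> u 0))\<^sup>2)
               \<cdot>\<^sub>m (aR M lam (\<beta> u 0) * herm (aR M lam (\<beta> u 0)))
           + 1\<^sub>m M)))
        | Q w. \<forall>v \<in> {1..U} - {u}. cov_ok (N v) (P v) (Q v) \<and> pos_ok (N v) (W v) (w v)}"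
proof -
  define G where "G v x = chan M lam (N v) (L v) (\<gamma> v) (\<beta> v) (\<theta> v) x" for v x
  define F where "F Q w v = G v (w v) * Q v * herm (G v (w v))"
    for Q :: "nat \<Rightarrow> complex mat" and w :: "nat \<Rightarrow> real vec" and v
  define U' where "U' = {1..U} - {u}"
  define A where "A = aR M lam (\<beta> u 0)"
  define a where "a i = A $$ (i,0)" for i
  define R where "R = mat M M (\<lambda>(i,j). a i * cnj (a j))"
  define c0 where "c0 = real M * real (N u) * (cmod (\<gamma> u 0))\<^sup>2"
  define feas where "feas S Q w \<longleftrightarrow> (\<forall>v\<in>S. cov_ok (N v) (P v) (Q v) \<and> pos_ok (N v) (W v) (w v))"
    for S and Q :: "nat \<Rightarrow> complex mat" and w :: "nat \<Rightarrow> real vec"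
  define f1 where "f1 Q w = ln (Re (det (msum M {1..U} (F Q w) + 1\<^sub>m M)))" for Q w
  define f2 where "f2 Q w = ln (Re (det (msum M U' (F Q w)
      + complex_of_real (real M * real (N u) * P u * (cmod (\<gamma> u 0))\<^sup>2) \<cdot>\<^sub>m (A * herm A) + 1\<^sub>m M)))" for Q w
  define T where "T w k = AT (N u) lam 1 (\<theta> u) (w u) $$ (k,0)" for w :: "nat \<Rightarrow> real vec" and k
  define s where "s Q w = (\<Sum>k<N u. \<Sum>l<N u. cnj (T w k) * Q u $$ (k,l) * T w l)" for Q w

  have uin: "u \<in> {1..U}" by fact
  have Nu: "N u \<ge> 1" using assms(3) uin by blast
  have Pu: "P u > 0" using assms(5) uin by blast
  have Wu: "W u > 0" using assms(6) uin by blast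
  have fin: "finite U'" unfolding U'_def by simp
  have AA: "A * herm A = R" unfolding A_def R_def a_def by (rule aR_outer)
  have c0nn: "c0 \<ge> 0" unfolding c0_def by simp
  have cP: "real M * real (N u) * P u * (cmod (\<gamma> u 0))\<^sup>2 = c0 * P u" unfolding c0_def by simp
  have Tn: "(\<Sum>k<N u. (cmod (T w k))\<^sup>2) = 1" for w unfolding T_def by (rule T_norm[OF Nu])

  have Fc: "F Q w v \<in> carrier_mat M M" if "psd (N v) (Q v)" for Q w v
    unfolding F_def G_def by (rule GQG_carrier) (use that in \<open>simp add: psd_def\<close>)
  have Fpsd: "psd M (F Q w v)" if "psd (N v) (Q v)" for Q w v
    unfolding F_def G_def by (rule psd_conj[OF chan_carrier that])
  have Hc: "msum M U' (F Q w) \<in> carrier_mat M M" if "feas U' Q w" for Q w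
    by (rule msum_carrier[OF _ fin]) (use that Fc in \<open>auto simp: feas_def cov_ok_def\<close>)
  have Hpsd: "psd M (msum M U' (F Q w))" if "feas U' Q w" for Q w
    by (rule psd_msum[OF _ fin]) (use that Fpsd in \<open>auto simp: feas_def cov_ok_def\<close>)
  have f2val: "f2 Q w = ln (Re (det (msum M U' (F Q w) + complex_of_real (c0 * P u) \<cdot>\<^sub>m R + 1\<^sub>m M)))" for Q w
    unfolding f2_def cP AA ..
  have Fu: "F Q w u = complex_of_real (c0 * Re (s Q w)) \<cdot>\<^sub>m R" if "psd (N u) (Q u)" for Q w
  proof -
    have cQ: "Q u \<in> carrier_mat (N u) (N u)" using that unfolding psd_def by blast
    have im: "Im (s Q w) = 0" unfolding s_def by (rule qf_real[OF that])
    then have sr: "s Q w = complex_of_real (Re (s Q w))" by (simp add: complex_eq_iff)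
    have "F Q w u = (complex_of_real c0 * s Q w) \<cdot>\<^sub>m (A * herm A)"
      unfolding F_def G_def A_def c0_def s_def T_def using user_u[OF cQ] assms(10) by simp
    also have "complex_of_real c0 * s Q w = complex_of_real (c0 * Re (s Q w))"
      by (subst sr) simp
    finally show ?thesis unfolding AA .
  qed
  have f1val: "f1 Q w = ln (Re (det (msum M U' (F Q w) + complex_of_real (c0 * Re (s Q w)) \<cdot>\<^sub>m R + 1\<^sub>m M)))"
    if fe: "feas {1..U} Q w" for Q w
  proof -
    have fe': "feas U' Q w" using fe unfolding feas_def U'_def by auto
    have pu: "psd (N u) (Q u)" using fe uin unfolding feas_def cov_ok_def by blast
    have "msum M {1..U} (F Q w) = F Q w u + msum M U' (F Q w)"
      unfolding U'_def by (rule msum_remove) (use uin fe Fc in \<open>auto simp: feas_def cov_ok_def\<close>)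
    also have "\<dots> = msum M U' (F Q w) + F Q w u"
      by (rule comm_add_mat[OF Fc[where Q=Q and w=w and v=u, OF pu] Hc[OF fe']])
    finally have eq: "msum M {1..U} (F Q w) = msum M U' (F Q w) + F Q w u" .
    show ?thesis unfolding f1_def eq Fu[of Q w, OF pu] by (rule refl)
  qed
  have bnd: "0 \<le> Re (s Q w) \<and> Re (s Q w) \<le> P u" if "cov_ok (N u) (P u) (Q u)" for Q w
    using qf_bound[of "N u" "Q u" "T w", OF _ Tn] that unfolding cov_ok_def s_def by auto

  have dir1: "\<forall>x\<in>{f1 Q w |Q w. feas {1..U} Q w}. \<exists>y\<in>{f2 Q w |Q w. feas U' Q w}. x \<le> y"
  proof
    fix x assume "x \<in> {f1 Q w |Q w. feas {1..U} Q w}"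
    then obtain Q w where x: "x = f1 Q w" and fe: "feas {1..U} Q w" by blast
    have fe': "feas U' Q w" using fe unfolding feas_def U'_def by auto
    have cu: "cov_ok (N u) (P u) (Q u)" using fe uin unfolding feas_def by blast
    have b: "0 \<le> c0 * Re (s Q w)" "c0 * Re (s Q w) \<le> c0 * P u"
      using bnd[of Q w, OF cu] c0nn by (auto intro: mult_left_mono)
    have dm: "0 < Re (det (msum M U' (F Q w) + complex_of_real (c0 * Re (s Q w)) \<cdot>\<^sub>m R + 1\<^sub>m M)) \<and>
       Re (det (msum M U' (F Q w) + complex_of_real (c0 * Re (s Q w)) \<cdot>\<^sub>m R + 1\<^sub>m M))
       \<le> Re (det (msum M U' (F Q w) + complex_of_real (c0 * P u) \<cdot>\<^sub>m R + 1\<^sub>m M))"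
      unfolding R_def by (rule det_mono[OF Hpsd[OF fe'] b])
    have "x \<le> f2 Q w" unfolding x f1val[OF fe] f2val using dm by simp
    moreover have "f2 Q w \<in> {f2 Q w |Q w. feas U' Q w}" using fe' by blast
    ultimately show "\<exists>y\<in>{f2 Q w |Q w. feas U' Q w}. x \<le> y" by blast
  qed
  have dir2: "\<forall>y\<in>{f2 Q w |Q w. feas U' Q w}. \<exists>x\<in>{f1 Q w |Q w. feas {1..U} Q w}. y \<le> x"
  proof
    fix y assume "y \<in> {f2 Q w |Q w. feas U' Q w}"
    then obtain Q w where y: "y = f2 Q w" and fe: "feas U' Q w" by blast
    define wu where "wu = vec (N u) (\<lambda>n. W u * real n / real (N u))"
    define w' where "w' = w(u := wu)"
    define Tu where "Tu k = T w' k" for k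
    define Qu where "Qu = complex_of_real (P u) \<cdot>\<^sub>m mat (N u) (N u) (\<lambda>(i,j). Tu i * cnj (Tu j))"
    define Q' where "Q' = Q(u := Qu)"
    have pQu: "psd (N u) Qu" unfolding Qu_def using Pu by (intro psd_smult psd_rank1) simp
    have nrm: "(\<Sum>k<N u. Tu k * cnj (Tu k)) = 1"
    proof -
      have "Tu k * cnj (Tu k) = complex_of_real ((cmod (Tu k))\<^sup>2)" for k
        using complex_norm_square[of "Tu k"] by simp
      then have "(\<Sum>k<N u. Tu k * cnj (Tu k)) = complex_of_real (\<Sum>k<N u. (cmod (Tu k))\<^sup>2)"
        by simp
      then show ?thesis using Tn[of w'] unfolding Tu_def by simp
    qed
    have trQu: "Re (mtrace Qu) = P u"
    proof -
      have "mtrace Qu = (\<Sum>k<N u. complex_of_real (P u) * (Tu k * cnj (Tu k)))"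
        unfolding mtrace_def Qu_def by simp
      also have "\<dots> = complex_of_real (P u)" by (simp add: sum_distrib_left[symmetric] nrm)
      finally show ?thesis by simp
    qed
    have cuQ: "cov_ok (N u) (P u) Qu" unfolding cov_ok_def using pQu trQu by simp
    have puw: "pos_ok (N u) (W u) wu" unfolding wu_def by (rule pos_exists[OF Wu Nu])
    have fe1: "feas {1..U} Q' w'"
      unfolding feas_def
    proof
      fix v assume v: "v \<in> {1..U}"
      show "cov_ok (N v) (P v) (Q' v) \<and> pos_ok (N v) (W v) (w' v)"
      proof (cases "v = u")
        case True then show ?thesis using cuQ puw unfolding Q'_def w'_def by simp
      next
        case False then have "v \<in> U'" using v unfolding U'_def by simp
        then show ?thesis using fe False unfolding feas_def Q'_def w'_def by simp
      qed
    qed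
    have sP: "s Q' w' = complex_of_real (P u)"
    proof -
      have "s Q' w' = (\<Sum>k<N u. \<Sum>l<N u. complex_of_real (P u) * ((Tu k * cnj (Tu k)) * (Tu l * cnj (Tu l))))"
        unfolding s_def Q'_def Tu_def[symmetric] Qu_def
        by (intro sum.cong refl) (simp add: Tu_def algebra_simps)
      also have "\<dots> = complex_of_real (P u) * (\<Sum>k<N u. \<Sum>l<N u. (Tu k * cnj (Tu k)) * (Tu l * cnj (Tu l)))"
        by (simp add: sum_distrib_left)
      also have "\<dots> = complex_of_real (P u) * ((\<Sum>k<N u. Tu k * cnj (Tu k)) * (\<Sum>l<N u. Tu l * cnj (Tu l)))"
        by (simp only: sum_product)
      finally show ?thesis using nrm by simp
    qed
    have Heq: "msum M U' (F Q' w') = msum M U' (F Q w)"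
      by (rule msum_cong[OF _ fin]) (auto simp: F_def Q'_def w'_def U'_def)
    have "f1 Q' w' = y"
      unfolding f1val[OF fe1] y f2val Heq sP by simp
    moreover have "f1 Q' w' \<in> {f1 Q w |Q w. feas {1..U} Q w}" using fe1 by blast
    ultimately show "\<exists>x\<in>{f1 Q w |Q w. feas {1..U} Q w}. y \<le> x" by force
  qed
  have main: "Sup {f1 Q w |Q w. feas {1..U} Q w} = Sup {f2 Q w |Q w. feas U' Q w}"
    by (rule Sup_eq_dom[OF dir1 dir2])
  show ?thesis using main unfolding f1_def f2_def F_def G_def feas_def U'_def A_def .
qed



end
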